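(* Let $N\ge2$, $r\ge1$. The set $\mathcal{GL}(r,N)\subset(\mathbb{R}^N)^r$ of $r$-tuples $w=(w_1,\dots,w_r)$ of pairwise distinct points such that $f_w(x)=\sum_{k=1}^r\log|x-w_k|^2$ is a global Morse function on $\mathbb{R}^N\setminus\{w_1,\dots,w_r\}$ is dense in $(\mathbb{R}^N)^r$.
   Context: A function $g$ is a (local) Morse function if all its critical points have nondegenerate Hessian; it is a global Morse function if moreover its critical values at distinct critical points are pairwise distinct. $|\cdot|$ is the Euclidean norm. *)

theory Defs
  imports "HOL-Analysis.Analysis"
begin

definition grad :: "(real^'n \<Rightarrow> real) \<Rightarrow> real^'n \<Rightarrow> real^'n" where
  "grad g x = (\<chi> i. frechet_derivative g (at x) (axis i 1))"

definition morse_on :: "(real^'n \<Rightarrow> real) \<Rightarrow> (real^'n) set \<Rightarrow> bool" where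
  "morse_on g U \<longleftrightarrow> open U \<and> (\<forall>x\<in>U. g differentiable (at x)) \<and>
     (\<forall>x\<in>U. grad g x = 0 \<longrightarrow> (\<exists>H. (grad g has_derivative H) (at x) \<and> inj H))"

definition global_morse_on :: "(real^'n \<Rightarrow> real) \<Rightarrow> (real^'n) set \<Rightarrow> bool" where
  "global_morse_on g U \<longleftrightarrow> morse_on g U \<and>
     (\<forall>x\<in>U. \<forall>y\<in>U. grad g x = 0 \<and> grad g y = 0 \<and> x \<noteq> y \<longrightarrow> g x \<noteq> g y)"

definition f_w :: "real^'n^'r \<Rightarrow> real^'n \<Rightarrow> real" where
  "f_w w x = (\<Sum>k\<in>UNIV. ln ((norm (x - w $ k))\<^sup>2))"

definition GL :: "(real^'n^'r) set" where
  "GL = {w. inj (\<lambda>k. w $ k) \<and> global_morse_on (f_w w) (UNIV - range (\<lambda>k. w $ k))}"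

end

theory Submission
  imports Defs
begin


typedef 'a wo = "UNIV :: 'a::finite set" by auto

instance wo :: (finite) finite
proof
  have "(UNIV :: 'a wo set) = Abs_wo ` UNIV"
    by (metis Rep_wo_inverse surj_def)
  then show "finite (UNIV :: 'a wo set)" by (metis finite finite_imageI)
qed

instantiation wo :: (finite) wellorder
begin
definition less_eq_wo :: "'a wo \<Rightarrow> 'a wo \<Rightarrow> bool" where
  "less_eq_wo x y \<longleftrightarrow> to_nat (Rep_wo x) \<le> to_nat (Rep_wo y)"
definition less_wo :: "'a wo \<Rightarrow> 'a wo \<Rightarrow> bool" where
  "less_wo x y \<longleftrightarrow> to_nat (Rep_wo x) < to_nat (Rep_wo y)"
instance
proof
  fix x y z :: "'a wo"
  show "(x < y) = (x \<le> y \<and> \<not> y \<le> x)" by (auto simp: less_eq_wo_def less_wo_def)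
  show "x \<le> x" by (auto simp: less_eq_wo_def)
  show "x \<le> y \<Longrightarrow> y \<le> z \<Longrightarrow> x \<le> z" by (auto simp: less_eq_wo_def)
  show "x \<le> y \<Longrightarrow> y \<le> x \<Longrightarrow> x = y"
    by (auto simp: less_eq_wo_def Rep_wo_inject[symmetric])
  show "x \<le> y \<or> y \<le> x" by (auto simp: less_eq_wo_def)
next
  fix P :: "'a wo \<Rightarrow> bool" and a
  assume H: "\<And>x. (\<And>y. y < x \<Longrightarrow> P y) \<Longrightarrow> P x"
  show "P a"
    by (induction a rule: measure_induct_rule[of "\<lambda>x. to_nat (Rep_wo x)"]) (rule H, auto simp: less_wo_def)
qed
end



definition Lw :: "real^'n^'r \<Rightarrow> real^(('n::finite \<times> 'r::finite) wo)" where
  "Lw w = (\<chi> i. w $ snd (Rep_wo i) $ fst (Rep_wo i))"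
definition Lwi :: "real^(('n::finite \<times> 'r::finite) wo) \<Rightarrow> real^'n^'r" where
  "Lwi v = (\<chi> k j. v $ Abs_wo (j,k))"

lemma Lwi_Lw[simp]: "Lwi (Lw w) = w"
  by (simp add: Lw_def Lwi_def Abs_wo_inverse vec_eq_iff)
lemma Lw_Lwi[simp]: "Lw (Lwi v) = v"
  by (simp add: Lw_def Lwi_def Rep_wo_inverse vec_eq_iff)
lemma linear_Lw: "linear Lw"
  by (rule linearI) (auto simp: Lw_def vec_eq_iff)
lemma linear_Lwi: "linear Lwi"
  by (rule linearI) (auto simp: Lwi_def vec_eq_iff)

lemma card_wo: "CARD(('a::finite) wo) = CARD('a)"
  using type_definition.card[OF type_definition_wo] by simp

lemma sard_vecvec:
  fixes f :: "real^'n^'r \<Rightarrow> real^'n^'r"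
  assumes der: "\<And>x. x \<in> S \<Longrightarrow> (f has_derivative f' x) (at x)"
    and ninj: "\<And>x. x \<in> S \<Longrightarrow> \<not> inj (f' x)"
  shows "negligible (f ` S)"
proof -
  let ?g = "Lw \<circ> f \<circ> Lwi"
  let ?g' = "\<lambda>y. Lw \<circ> f' (Lwi y) \<circ> Lwi"
  have "negligible (?g ` (Lw ` S))"
  proof (rule baby_Sard)
    show "CARD(('n \<times> 'r) wo) \<le> CARD(('n \<times> 'r) wo)" by simp
  next
    fix y assume "y \<in> Lw ` S"
    then obtain x where x: "x \<in> S" "y = Lw x" by auto
    have d1: "(Lwi has_derivative Lwi) (at y)"
      by (simp add: linear_Lwi linear_imp_has_derivative)
    have d2: "(f has_derivative f' x) (at (Lwi y))" using x der by simp
    have d3: "(Lw has_derivative Lw) (at (f (Lwi y)))"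
      by (simp add: linear_Lw linear_imp_has_derivative)
    have "((Lw \<circ> (f \<circ> Lwi)) has_derivative (Lw \<circ> (f' x \<circ> Lwi))) (at y)"
      by (rule diff_chain_at[OF diff_chain_at[OF d1 d2] ]) (simp add: d3)
    then have "(?g has_derivative ?g' y) (at y)"
      using x by (simp add: o_assoc)
    then show "(?g has_derivative ?g' y) (at y within Lw ` S)"
      by (rule has_derivative_at_withinI)
    have lin: "linear (?g' y)"
      using der[OF x(1)] x by (auto intro!: linear_compose linear_Lw linear_Lwi dest: has_derivative_linear)
    have "\<not> inj (?g' y)"
    proof
      assume "inj (?g' y)"
      then have "inj (f' x)"
        using x by (auto simp: inj_def) (metis Lwi_Lw)
      with ninj x show False by auto
    qed
    then have "rank (matrix (?g' y)) \<noteq> CARD(('n \<times> 'r) wo)"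
      using lin full_rank_injective[of "matrix (?g' y)"] by simp
    then show "rank (matrix (?g' y)) < CARD(('n \<times> 'r) wo)"
      using rank_bound[of "matrix (?g' y)"] by linarith
  qed
  then have "negligible (Lwi ` (?g ` (Lw ` S)))"
    by (rule negligible_differentiable_image_negligible[rotated])
       (auto simp: card_wo intro!: linear_imp_differentiable_on linear_Lwi)
  moreover have "Lwi ` (?g ` (Lw ` S)) = f ` S"
    by (force simp: image_comp o_def)
  ultimately show ?thesis by simp
qed



lemma proj_norm_sq:
  fixes e v :: "'a::real_inner"
  assumes "norm e = 1"
  shows "(norm (v - (e \<bullet> v) *\<^sub>R e))\<^sup>2 = (norm v)\<^sup>2 - (e \<bullet> v)\<^sup>2"
proof -
  have ee: "e \<bullet> e = 1" using assms by (simp add: norm_eq_sqrt_inner)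
  show ?thesis
    by (simp only: power2_norm_eq_inner)
       (simp add: inner_diff_left inner_diff_right ee inner_commute power2_eq_square algebra_simps)
qed

lemma graph_piece_negligible:
  fixes P :: "'a::euclidean_space set"
  assumes e: "norm e = 1"
    and H: "\<And>s s'. s \<in> P \<Longrightarrow> s' \<in> P \<Longrightarrow> \<bar>e \<bullet> (s' - s)\<bar> \<le> 3/4 * norm (s' - s)"
  shows "negligible P"
proof -
  define pr where "pr z = z - (e \<bullet> z) *\<^sub>R e" for z
  have prd: "pr s' - pr s = (s' - s) - (e \<bullet> (s' - s)) *\<^sub>R e" for s s'
    by (simp add: pr_def inner_diff_right algebra_simps)
  have key: "norm (s' - s) \<le> 2 * norm (pr s' - pr s)" if "s \<in> P" "s' \<in> P" for s s'
  proof -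
    have h: "\<bar>e \<bullet> (s' - s)\<bar> \<le> 3/4 * norm (s' - s)" using H that .
    have "(e \<bullet> (s' - s))\<^sup>2 \<le> (3/4 * norm (s' - s))\<^sup>2"
      using h by (metis abs_ge_zero power2_abs power_mono)
    then have "(e \<bullet> (s' - s))\<^sup>2 \<le> 9/16 * (norm (s' - s))\<^sup>2"
      by (simp add: power_mult_distrib power_divide)
    then have "(norm (s' - s))\<^sup>2 \<le> 4 * (norm (pr s' - pr s))\<^sup>2"
      by (simp add: prd proj_norm_sq[OF e]) (smt (verit) zero_le_power2)
    also have "\<dots> = (2 * norm (pr s' - pr s))\<^sup>2" by (simp add: power_mult_distrib)
    finally show ?thesis
      by (meson abs_le_square_iff abs_norm_cancel norm_ge_zero dual_order.trans abs_ge_self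
          mult_nonneg_nonneg zero_le_numeral power2_le_imp_le)
  qed
  define g where "g = inv_into P pr"
  have inj: "inj_on pr P"
    using key by (force simp: inj_on_def)
  have "negligible (g ` (pr ` P))"
  proof (rule negligible_locally_Lipschitz_image)
    show "DIM('a) \<le> DIM('a)" by simp
    have "e \<noteq> 0" using e by auto
    then have "negligible {z. e \<bullet> z = 0}" by (intro negligible_hyperplane) auto
    moreover have "pr ` P \<subseteq> {z. e \<bullet> z = 0}"
      using e by (auto simp: pr_def inner_diff_right norm_eq_sqrt_inner)
    ultimately show "negligible (pr ` P)" by (rule negligible_subset)
  next
    fix z assume "z \<in> pr ` P"
    show "\<exists>T B. open T \<and> z \<in> T \<and> (\<forall>y\<in>pr ` P \<inter> T. norm (g y - g z) \<le> B * norm (y - z))"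
    proof (intro exI conjI ballI)
      fix y assume "y \<in> pr ` P \<inter> UNIV"
      with \<open>z \<in> pr ` P\<close> obtain s s' where "s \<in> P" "s' \<in> P" "z = pr s" "y = pr s'" by auto
      then show "norm (g y - g z) \<le> 2 * norm (y - z)"
        using key inj by (simp add: g_def)
    qed auto
  qed
  moreover have "g ` (pr ` P) = P"
    using inj by (simp add: g_def)
  ultimately show ?thesis by simp
qed



lemma cone_negligible:
  fixes T :: "('a::euclidean_space \<times> 'b::euclidean_space) set"
  assumes H: "\<And>t. t \<in> T \<Longrightarrow> \<exists>\<nu> \<delta>. norm \<nu> = 1 \<and> \<delta> > 0 \<and>
       (\<forall>t'\<in>T. dist t' t < \<delta> \<longrightarrow> \<bar>\<nu> \<bullet> (fst t' - fst t)\<bar> \<le> norm (fst t' - fst t) / 2)"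
  shows "negligible (fst ` T)"
proof -
  obtain \<nu> \<delta> where nd: "\<And>t. t \<in> T \<Longrightarrow> norm (\<nu> t) = 1 \<and> \<delta> t > 0 \<and>
       (\<forall>t'\<in>T. dist t' t < \<delta> t \<longrightarrow> \<bar>\<nu> t \<bullet> (fst t' - fst t)\<bar> \<le> norm (fst t' - fst t) / 2)"
    using H by metis
  obtain Da :: "'a set" where Da: "countable Da" "\<And>X. open X \<Longrightarrow> X \<noteq> {} \<Longrightarrow> \<exists>d\<in>Da. d \<in> X"
    using countable_dense_exists by blast
  obtain Db :: "('a \<times> 'b) set" where Db: "countable Db" "\<And>X. open X \<Longrightarrow> X \<noteq> {} \<Longrightarrow> \<exists>d\<in>Db. d \<in> X"
    using countable_dense_exists by blast
  define piece where "piece u m c = {t\<in>T. norm (\<nu> t - u) < 1/8 \<and> 1 / real (Suc m) < \<delta> t \<and> dist t c < 1 / (2 * real (Suc m))}"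
    for u m c
  have pn: "negligible (fst ` piece u m c)" for u m c
  proof (cases "piece u m c = {}")
    case True then show ?thesis by simp
  next
    case False
    then obtain t0 where t0: "t0 \<in> piece u m c" by auto
    have "norm u \<ge> 7/8"
      using t0 nd[of t0] norm_triangle_ineq2[of "\<nu> t0" u] by (auto simp: piece_def norm_minus_commute)
    then have u0: "norm u > 0" by linarith
    define e where "e = u /\<^sub>R norm u"
    have e: "norm e = 1" using u0 by (simp add: e_def)
    show ?thesis
    proof (rule graph_piece_negligible[OF e])
      fix s s' assume "s \<in> fst ` piece u m c" "s' \<in> fst ` piece u m c"
      then obtain t t' where t: "t \<in> piece u m c" "s = fst t" and t': "t' \<in> piece u m c" "s' = fst t'" by auto
      have "dist t' t \<le> dist t' c + dist t c" by (simp add: dist_triangle2)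
      also have "\<dots> < 1 / (2 * real (Suc m)) + 1 / (2 * real (Suc m))"
        using t t' by (intro add_strict_mono) (auto simp: piece_def)
      also have "\<dots> = 1 / real (Suc m)" by (simp add: field_simps)
      also have "\<dots> < \<delta> t" using t by (simp add: piece_def)
      finally have "dist t' t < \<delta> t" .
      then have c1: "\<bar>\<nu> t \<bullet> (s' - s)\<bar> \<le> norm (s' - s) / 2"
        using nd[of t] t t' by (auto simp: piece_def)
      have "\<bar>(u - \<nu> t) \<bullet> (s' - s)\<bar> \<le> norm (u - \<nu> t) * norm (s' - s)"
        by (rule Cauchy_Schwarz_ineq2)
      also have "\<dots> \<le> 1/8 * norm (s' - s)"
        using t by (intro mult_right_mono) (auto simp: piece_def norm_minus_commute)
      finally have c2: "\<bar>(u - \<nu> t) \<bullet> (s' - s)\<bar> \<le> 1/8 * norm (s' - s)" .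
      have "u \<bullet> (s' - s) = \<nu> t \<bullet> (s' - s) + (u - \<nu> t) \<bullet> (s' - s)"
        by (simp add: inner_diff_left)
      then have c3: "\<bar>u \<bullet> (s' - s)\<bar> \<le> 5/8 * norm (s' - s)" using c1 c2 by linarith
      have "\<bar>e \<bullet> (s' - s)\<bar> = \<bar>u \<bullet> (s' - s)\<bar> / norm u"
        using u0 by (simp add: e_def abs_mult divide_inverse mult.commute)
      also have "\<dots> \<le> (5/8 * norm (s' - s)) / (7/8)"
        using c3 \<open>norm u \<ge> 7/8\<close> by (intro frac_le) auto
      also have "\<dots> \<le> 3/4 * norm (s' - s)" by simp
      finally show "\<bar>e \<bullet> (s' - s)\<bar> \<le> 3/4 * norm (s' - s)" .
    qed
  qed
  have cover: "T \<subseteq> (\<Union>(u,m,c)\<in>Da \<times> UNIV \<times> Db. piece u m c)"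
  proof
    fix t assume t: "t \<in> T"
    obtain u where u: "u \<in> Da" "u \<in> ball (\<nu> t) (1/8)" using Da(2)[of "ball (\<nu> t) (1/8)"] by auto
    have "\<delta> t > 0" using nd[OF t] by blast
    from reals_Archimedean[OF this] obtain m where "inverse (real (Suc m)) < \<delta> t" by blast
    then have m: "1 / real (Suc m) < \<delta> t" by (simp add: inverse_eq_divide)
    obtain c where c: "c \<in> Db" "c \<in> ball t (1 / (2 * real (Suc m)))"
      using Db(2)[of "ball t (1 / (2 * real (Suc m)))"] by auto
    have "norm (\<nu> t - u) < 1/8" using u(2) by (simp add: dist_norm)
    moreover have "dist t c < 1 / (2 * real (Suc m))" using c(2) by (simp add: dist_commute)
    ultimately have "t \<in> piece u m c" using t m unfolding piece_def by blast
    then show "t \<in> (\<Union>(u,m,c)\<in>Da \<times> UNIV \<times> Db. piece u m c)" using u c by blast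
  qed
  have "fst ` T \<subseteq> \<Union>((\<lambda>(u,m,c). fst ` piece u m c) ` (Da \<times> UNIV \<times> Db))"
  proof
    fix s assume "s \<in> fst ` T"
    then obtain t where "t \<in> T" "s = fst t" by auto
    with cover obtain u m c where "(u,m,c) \<in> Da \<times> UNIV \<times> Db" "t \<in> piece u m c" by blast
    then show "s \<in> \<Union>((\<lambda>(u,m,c). fst ` piece u m c) ` (Da \<times> UNIV \<times> Db))"
      using \<open>s = fst t\<close> by (intro UnionI[of "fst ` piece u m c"]) auto
  qed
  moreover have "negligible (\<Union>((\<lambda>(u,m,c). fst ` piece u m c) ` (Da \<times> UNIV \<times> Db)))"
  proof (rule negligible_countable_Union)
    show "countable ((\<lambda>(u,m,c). fst ` piece u m c) ` (Da \<times> UNIV \<times> Db))"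
      using Da(1) Db(1) by (intro countable_image countable_SIGMA) auto
  qed (auto simp: pn)
  ultimately show ?thesis by (rule negligible_subset[rotated])
qed



definition ainv :: "'a::real_inner \<Rightarrow> 'a" where
  "ainv v = inverse (v \<bullet> v) *\<^sub>R v"
definition Dainv :: "'a::real_inner \<Rightarrow> 'a \<Rightarrow> 'a" where
  "Dainv u h = inverse (u \<bullet> u) *\<^sub>R h - (2 * (u \<bullet> h) / (u \<bullet> u)^2) *\<^sub>R u"

lemma ainv_deriv:
  fixes u :: "'a::real_inner"
  assumes "u \<noteq> 0"
  shows "(ainv has_derivative Dainv u) (at u)"
proof -
  have uu: "u \<bullet> u \<noteq> 0" using assms by simp
  show ?thesis
  proof -
    have d0: "((\<lambda>x::'a. x) has_derivative (\<lambda>h. h)) (at u)" by (rule has_derivative_ident)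
    have d1: "((\<lambda>x. x \<bullet> x) has_derivative (\<lambda>h. u \<bullet> h + h \<bullet> u)) (at u)"
      using has_derivative_inner[OF d0 d0] by simp
    have d2: "((\<lambda>x. inverse (x \<bullet> x)) has_derivative
        (\<lambda>h. - (inverse (u \<bullet> u) * (u \<bullet> h + h \<bullet> u) * inverse (u \<bullet> u)))) (at u)"
      by (rule Deriv.has_derivative_inverse[OF uu d1])
    note d3 = has_derivative_scaleR[OF d2 d0]
    show ?thesis
      unfolding ainv_def [abs_def]
      apply (rule has_derivative_eq_rhs[OF d3])
      apply (rule ext)
      apply (simp add: Dainv_def field_simps inner_commute power2_eq_square scaleR_diff_right)
      done
  qed
qed

lemma ainv_neg: "ainv (- v) = - ainv v"
  by (simp add: ainv_def)

lemma ainv_zero_iff[simp]: "ainv v = 0 \<longleftrightarrow> v = 0"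
  by (simp add: ainv_def)

lemma ainv_ainv[simp]: "ainv (ainv v) = v"
proof (cases "v = 0")
  case True then show ?thesis by (simp add: ainv_def)
next
  case False
  then have vv: "v \<bullet> v \<noteq> 0" by simp
  show ?thesis
    using vv by (simp add: ainv_def field_simps power2_eq_square)
qed

lemma inj_ainv: "inj ainv"
  by (metis ainv_ainv injI)

lemma linear_Dainv: "linear (Dainv u)"
  by (rule linearI) (auto simp: Dainv_def inner_add_right algebra_simps add_divide_distrib)

lemma Dainv_neg: "Dainv (- u) = Dainv u"
  by (rule ext) (simp add: Dainv_def)

lemma Dainv_inv:
  fixes u :: "'a::real_inner"
  assumes "u \<noteq> 0"
  shows "Dainv u (Dainv (ainv u) v) = v"
proof -
  define c where "c = u \<bullet> u"
  have c: "c \<noteq> 0" using assms by (simp add: c_def)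
  have au: "ainv u = inverse c *\<^sub>R u" by (simp add: ainv_def c_def)
  have a1: "ainv u \<bullet> ainv u = inverse c" using c by (simp add: au c_def[symmetric] field_simps)
  have a2: "ainv u \<bullet> v = inverse c * (u \<bullet> v)" by (simp add: au)
  have eq: "Dainv (ainv u) v = c *\<^sub>R v - (2 * (u \<bullet> v)) *\<^sub>R u"
    unfolding Dainv_def a1 a2 using c by (simp add: au field_simps power2_eq_square)
  have uh: "u \<bullet> (c *\<^sub>R v - (2 * (u \<bullet> v)) *\<^sub>R u) = - c * (u \<bullet> v)"
    by (simp add: inner_diff_right c_def[symmetric] algebra_simps)
  have "Dainv u (c *\<^sub>R v - (2 * (u \<bullet> v)) *\<^sub>R u) = v"
    unfolding Dainv_def uh c_def[symmetric] using c
    by (simp add: algebra_simps power2_eq_square) (simp add: field_simps)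
  then show ?thesis by (simp only: eq)
qed



definition Gw :: "real^'n^'r \<Rightarrow> real^'n \<Rightarrow> real^'n" where
  "Gw w x = (\<Sum>k\<in>UNIV. 2 *\<^sub>R ainv (x - w$k))"
definition Hw :: "real^'n^'r \<Rightarrow> real^'n \<Rightarrow> real^'n \<Rightarrow> real^'n" where
  "Hw w x h = (\<Sum>k\<in>UNIV. 2 *\<^sub>R Dainv (x - w$k) h)"
definition nuw :: "real^'n^'r \<Rightarrow> real^'n \<Rightarrow> real^'n^'r" where
  "nuw w x = (\<chi> k. (-2) *\<^sub>R ainv (x - w$k))"

lemma hd_fst_nth[derivative_intros]:
  "((\<lambda>z::(real^'n^'r) \<times> 'b::euclidean_space. fst z $ k) has_derivative (\<lambda>z. fst z $ k)) F"
proof -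
  have "linear (\<lambda>z::(real^'n^'r) \<times> 'b. fst z $ k)"
    by (rule linearI) auto
  then show ?thesis
    by (simp add: bounded_linear_imp_has_derivative linear_conv_bounded_linear)
qed

lemma ainv_aux: "(v \<bullet> d + d \<bullet> v) * inverse (v \<bullet> v) = (2 *\<^sub>R ainv v) \<bullet> d"
  by (simp add: ainv_def inner_commute[of d v])

lemma term_deriv:
  fixes w :: "real^'n^'r" and x :: "real^'n"
  assumes "x \<noteq> w $ k"
  shows "((\<lambda>z::(real^'n^'r) \<times> (real^'n). ln ((norm (snd z - fst z $ k))\<^sup>2)) has_derivative
          (\<lambda>h. (2 *\<^sub>R ainv (x - w$k)) \<bullet> (snd h - fst h $ k))) (at (w,x))"
proof -
  let ?v = "x - w$k"
  have pos: "?v \<bullet> ?v > 0" using assms by simp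
  have d: "((\<lambda>z::(real^'n^'r) \<times> (real^'n). snd z - fst z $ k) has_derivative (\<lambda>h. snd h - fst h $ k)) (at (w,x))"
    by (intro derivative_eq_intros) auto
  have "((\<lambda>z::(real^'n^'r) \<times> (real^'n). ln ((snd z - fst z $ k) \<bullet> (snd z - fst z $ k))) has_derivative
          (\<lambda>h. (2 *\<^sub>R ainv (x - w$k)) \<bullet> (snd h - fst h $ k))) (at (w,x))"
  proof -
    note d2 = has_derivative_inner[OF d d]
    have "DERIV ln ((snd (w,x) - fst (w,x) $ k) \<bullet> (snd (w,x) - fst (w,x) $ k)) :> inverse (?v \<bullet> ?v)"
      using pos by (simp add: DERIV_ln)
    note d3 = DERIV_compose_FDERIV[OF this d2]
    show ?thesis
      apply (rule has_derivative_eq_rhs[OF d3])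
      apply (rule ext)
      apply (simp only: snd_conv fst_conv ainv_aux)
      done
  qed
  then show ?thesis by (simp add: power2_norm_eq_inner)
qed

lemma nuw_inner: "nuw w x \<bullet> hw = (\<Sum>k\<in>UNIV. ((-2) *\<^sub>R ainv (x - w$k)) \<bullet> hw $ k)"
  unfolding nuw_def by (subst inner_vec_def) simp

lemma F_joint:
  fixes w :: "real^'n^'r" and x :: "real^'n"
  assumes "\<And>k. x \<noteq> w $ k"
  shows "((\<lambda>z::(real^'n^'r) \<times> (real^'n). f_w (fst z) (snd z)) has_derivative
          (\<lambda>h. Gw w x \<bullet> snd h + nuw w x \<bullet> fst h)) (at (w,x))"
proof -
  have "((\<lambda>z::(real^'n^'r) \<times> (real^'n). \<Sum>k\<in>UNIV. ln ((norm (snd z - fst z $ k))\<^sup>2)) has_derivative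
          (\<lambda>h. \<Sum>k\<in>UNIV. (2 *\<^sub>R ainv (x - w$k)) \<bullet> (snd h - fst h $ k))) (at (w,x))"
    by (rule has_derivative_sum) (rule term_deriv[OF assms])
  moreover have "(\<lambda>h::(real^'n^'r) \<times> (real^'n). \<Sum>k\<in>UNIV. (2 *\<^sub>R ainv (x - w$k)) \<bullet> (snd h - fst h $ k))
      = (\<lambda>h. Gw w x \<bullet> snd h + nuw w x \<bullet> fst h)"
    by (rule ext) (simp add: Gw_def nuw_inner inner_sum_left inner_diff_right sum_subtractf sum_negf)
  ultimately show ?thesis by (simp add: f_w_def[abs_def])
qed

lemma Gterm_deriv:
  fixes w :: "real^'n^'r" and x :: "real^'n"
  assumes "x \<noteq> w $ k"
  shows "((\<lambda>z::(real^'n^'r) \<times> (real^'n). 2 *\<^sub>R ainv (snd z - fst z $ k)) has_derivative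
          (\<lambda>h. 2 *\<^sub>R Dainv (x - w$k) (snd h - fst h $ k))) (at (w,x))"
proof -
  have d: "((\<lambda>z::(real^'n^'r) \<times> (real^'n). snd z - fst z $ k) has_derivative (\<lambda>h. snd h - fst h $ k)) (at (w,x))"
    by (intro derivative_eq_intros) auto
  have "(ainv has_derivative Dainv (x - w$k)) (at ((\<lambda>z::(real^'n^'r) \<times> (real^'n). snd z - fst z $ k) (w,x)))"
    using assms by (simp add: ainv_deriv)
  from has_derivative_compose[OF d this]
  have "((\<lambda>z::(real^'n^'r) \<times> (real^'n). ainv (snd z - fst z $ k)) has_derivative
          (\<lambda>h. Dainv (x - w$k) (snd h - fst h $ k))) (at (w,x))" .
  then show ?thesis by (rule has_derivative_scaleR_right)
qed

lemma G_joint: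
  fixes w :: "real^'n^'r" and x :: "real^'n"
  assumes "\<And>k. x \<noteq> w $ k"
  shows "((\<lambda>z::(real^'n^'r) \<times> (real^'n). Gw (fst z) (snd z)) has_derivative
          (\<lambda>h. \<Sum>k\<in>UNIV. 2 *\<^sub>R Dainv (x - w$k) (snd h - fst h $ k))) (at (w,x))"
  unfolding Gw_def by (rule has_derivative_sum) (rule Gterm_deriv[OF assms])

lemma pair_deriv: "((\<lambda>y::'b::real_normed_vector. (w::'a::real_normed_vector, y)) has_derivative (\<lambda>h. (0, h))) (at x)"
  by (intro derivative_eq_intros) auto

lemma F_x:
  fixes w :: "real^'n^'r" and x :: "real^'n"
  assumes "\<And>k. x \<noteq> w $ k"
  shows "(f_w w has_derivative (\<lambda>h. Gw w x \<bullet> h)) (at x)"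
  using has_derivative_compose[OF pair_deriv[of w x] F_joint[OF assms]] by simp

lemma G_x:
  fixes w :: "real^'n^'r" and x :: "real^'n"
  assumes "\<And>k. x \<noteq> w $ k"
  shows "(Gw w has_derivative Hw w x) (at x)"
  using has_derivative_compose[OF pair_deriv[of w x] G_joint[OF assms]] by (simp add: Hw_def[abs_def])



lemma open_U: "open (UNIV - range (\<lambda>k. (w::real^'n^'r) $ k))"
  by (intro open_Diff open_UNIV finite_imp_closed finite_imageI) simp

lemma grad_eq:
  fixes w :: "real^'n^'r"
  assumes "\<And>k. x \<noteq> w $ k"
  shows "grad (f_w w) x = Gw w x"
proof -
  have "(\<lambda>h. Gw w x \<bullet> h) = frechet_derivative (f_w w) (at x)"
    by (rule frechet_derivative_at[OF F_x[OF assms]])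
  then show ?thesis
    by (simp add: grad_def vec_eq_iff inner_axis flip: \<open>(\<lambda>h. Gw w x \<bullet> h) = _\<close>)
qed

lemma grad_deriv:
  fixes w :: "real^'n^'r"
  assumes "\<And>k. x \<noteq> w $ k"
  shows "(grad (f_w w) has_derivative Hw w x) (at x)"
proof (rule has_derivative_transform_within_open[OF G_x[OF assms] open_U[of w]])
  show "x \<in> UNIV - range (($) w)" using assms by auto
  fix y assume "y \<in> UNIV - range (($) w)"
  then show "Gw w y = grad (f_w w) y" by (intro grad_eq[symmetric]) auto
qed

definition "B0 = {w::real^'n^'r. \<not> inj (\<lambda>k. w $ k)}"
definition "B1 = {w::real^'n^'r. \<exists>x. (\<forall>k. x \<noteq> w$k) \<and> Gw w x = 0 \<and> \<not> inj (Hw w x)}"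
definition "B2 = {w::real^'n^'r. \<exists>x y. (\<forall>k. x \<noteq> w$k) \<and> (\<forall>k. y \<noteq> w$k) \<and> x \<noteq> y \<and>
   Gw w x = 0 \<and> Gw w y = 0 \<and> inj (Hw w x) \<and> inj (Hw w y) \<and> f_w w x = f_w w y}"

lemma notGL: "- GL \<subseteq> B0 \<union> B1 \<union> (B2 :: (real^'n^'r) set)"
proof
  fix w :: "real^'n^'r"
  assume w: "w \<in> - GL"
  show "w \<in> B0 \<union> B1 \<union> B2"
  proof (rule ccontr)
    assume "w \<notin> B0 \<union> B1 \<union> B2"
    then have i: "inj (\<lambda>k. w $ k)" and n1: "w \<notin> B1" and n2: "w \<notin> B2"
      by (auto simp: B0_def)
    let ?U = "UNIV - range (\<lambda>k. w $ k)"
    have U: "x \<in> ?U \<longleftrightarrow> (\<forall>k. x \<noteq> w $ k)" for x by auto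
    have m: "morse_on (f_w w) ?U"
      unfolding morse_on_def
    proof (intro conjI ballI impI)
      show "open ?U" by (rule open_U)
    next
      fix x assume "x \<in> ?U"
      then show "f_w w differentiable at x" using F_x[of x w] U by (auto simp: differentiable_def)
    next
      fix x assume x: "x \<in> ?U" and g: "grad (f_w w) x = 0"
      then have "Gw w x = 0" using grad_eq[of x w] U by auto
      then have "inj (Hw w x)" using n1 x U by (auto simp: B1_def)
      then show "\<exists>H. (grad (f_w w) has_derivative H) (at x) \<and> inj H"
        using grad_deriv[of x w] x U by blast
    qed
    have "global_morse_on (f_w w) ?U"
      unfolding global_morse_on_def
    proof (intro conjI m ballI impI)
      fix x y assume x: "x \<in> ?U" and y: "y \<in> ?U" and c: "grad (f_w w) x = 0 \<and> grad (f_w w) y = 0 \<and> x \<noteq> y"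
      then have gx: "Gw w x = 0" and gy: "Gw w y = 0" using grad_eq[of x w] grad_eq[of y w] U by auto
      then have "inj (Hw w x)" "inj (Hw w y)" using n1 x y U by (auto simp: B1_def)
      then show "f_w w x \<noteq> f_w w y" using n2 x y U gx gy c unfolding B2_def by blast
    qed
    with i have "w \<in> GL" by (simp add: GL_def)
    with w show False by simp
  qed
qed

lemma negligible_B0: "negligible (B0 :: (real^'n^'r) set)"
proof -
  obtain i :: 'n where True by blast
  define a where "a k l = (axis k (axis i 1) - axis l (axis i 1) :: real^'n^'r)" for k l
  have "B0 \<subseteq> \<Union>((\<lambda>(k,l). {w. a k l \<bullet> w = 0}) ` {(k,l). k \<noteq> l})"
  proof
    fix w :: "real^'n^'r" assume "w \<in> B0"
    then obtain k l where kl: "k \<noteq> l" "w $ k = w $ l" by (auto simp: B0_def inj_def)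
    then have "a k l \<bullet> w = 0" by (simp add: a_def inner_diff_left inner_axis')
    with kl show "w \<in> \<Union>((\<lambda>(k,l). {w. a k l \<bullet> w = 0}) ` {(k,l). k \<noteq> l})" by blast
  qed
  moreover have "negligible (\<Union>((\<lambda>(k,l). {w. a k l \<bullet> w = 0}) ` {(k,l). k \<noteq> l}))"
  proof (rule negligible_Union)
    show "finite ((\<lambda>(k,l). {w. a k l \<bullet> w = 0}) ` {(k,l). k \<noteq> l})" by simp
  next
    fix T assume "T \<in> (\<lambda>(k,l). {w. a k l \<bullet> w = 0}) ` {(k,l). k \<noteq> l}"
    then obtain k l where kl: "k \<noteq> l" "T = {w. a k l \<bullet> w = 0}" by auto
    have "a k l $ k $ i = 1" using kl by (simp add: a_def axis_def)
    then have "a k l \<noteq> 0" by auto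
    then show "negligible T" using kl by (simp add: negligible_hyperplane)
  qed
  ultimately show ?thesis by (rule negligible_subset[rotated])
qed

lemma closure_from_negligible:
  assumes "negligible (- S)"
  shows "closure (S :: 'a::euclidean_space set) = UNIV"
proof -
  have "x \<in> closure S" for x
  proof (rule ccontr)
    assume "x \<notin> closure S"
    then obtain e where e: "e > 0" "ball x e \<inter> S = {}"
      by (metis closure_approachable disjoint_iff mem_ball dist_commute)
    then have "ball x e \<subseteq> - S" by auto
    then have "negligible (ball x e)" using assms negligible_subset by blast
    with open_not_negligible[of "ball x e"] e show False by auto
  qed
  then show ?thesis by auto
qed



lemma key_estimate:
  fixes F :: "'a::euclidean_space \<times> 'b::euclidean_space \<Rightarrow> real" and G :: "'a \<times> 'b \<Rightarrow> 'b"
  assumes dF: "(F has_derivative (\<lambda>h. n \<bullet> fst h)) (at (w,x))"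
    and dG: "(G has_derivative DG) (at (w,x))"
    and H: "inj (\<lambda>h. DG (0,h))"
    and G0: "G (w,x) = 0"
    and e: "\<epsilon> > 0"
  shows "\<exists>\<delta>>0. \<forall>w' x'. norm ((w',x') - (w,x)) < \<delta> \<longrightarrow> G (w',x') = 0 \<longrightarrow>
            \<bar>F (w',x') - F (w,x) - n \<bullet> (w' - w)\<bar> \<le> \<epsilon> * norm (w' - w)"
proof -
  have blDG: "bounded_linear DG" using dG by (rule has_derivative_bounded_linear)
  then have linDG: "linear DG" by (rule bounded_linear.linear)
  have lin0: "linear (\<lambda>h. DG (0,h))"
  proof (rule linearI)
    fix a b :: 'b and r :: real
    show "DG (0, a + b) = DG (0,a) + DG (0,b)"
      using linear_add[OF linDG, of "(0,a)" "(0,b)"] by simp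
    show "DG (0, r *\<^sub>R a) = r *\<^sub>R DG (0,a)"
      using linear_scale[OF linDG, of r "(0,a)"] by simp
  qed
  obtain c where c: "c > 0" "\<And>h. c * norm h \<le> norm (DG (0,h))"
    using linear_inj_bounded_below_pos[OF lin0 H] by blast
  have bl1: "bounded_linear (\<lambda>h. DG (h,0))"
    using blDG by (rule bounded_linear_compose) (rule bounded_linear_Pair, rule bounded_linear_ident, rule bounded_linear_zero)
  obtain K where K: "K > 0" "\<And>h. norm (DG (h,0)) \<le> norm h * K"
    using bounded_linear.pos_bounded[OF bl1] by blast
  obtain \<delta>1 where d1: "\<delta>1 > 0" "\<And>z. norm (z - (w,x)) < \<delta>1 \<Longrightarrow> norm (G z - G (w,x) - DG (z - (w,x))) \<le> c/2 * norm (z - (w,x))"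
    using dG c(1) unfolding has_derivative_at_alt by (metis half_gt_zero)
  define C where "C = (c + 2*K) / c"
  have C: "C \<ge> 0" using c K by (simp add: C_def)
  define \<eta> where "\<eta> = \<epsilon> / (1 + C)"
  have eta: "\<eta> > 0" using e C by (simp add: \<eta>_def)
  obtain \<delta>2 where d2: "\<delta>2 > 0" "\<And>z. norm (z - (w,x)) < \<delta>2 \<Longrightarrow> norm (F z - F (w,x) - n \<bullet> fst (z - (w,x))) \<le> \<eta> * norm (z - (w,x))"
    using dF eta unfolding has_derivative_at_alt by metis
  show ?thesis
  proof (intro exI[of _ "min \<delta>1 \<delta>2"] conjI allI impI)
    show "min \<delta>1 \<delta>2 > 0" using d1 d2 by simp
    fix w' x' assume lt: "norm ((w',x') - (w,x)) < min \<delta>1 \<delta>2" and g: "G (w',x') = 0"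
    define hw where "hw = w' - w"
    define hx where "hx = x' - x"
    have z: "(w',x') - (w,x) = (hw,hx)" by (simp add: hw_def hx_def)
    have nz: "norm (hw,hx) \<le> norm hw + norm hx" by (rule norm_Pair_le)
    have "norm (DG (hw,hx)) \<le> c/2 * norm (hw,hx)"
      using d1(2)[of "(w',x')"] lt g G0 z by simp
    moreover have "c/2 * norm (hw,hx) \<le> c/2 * (norm hw + norm hx)"
      using nz c(1) by (intro mult_left_mono) auto
    ultimately have a1: "norm (DG (hw,hx)) \<le> c/2 * (norm hw + norm hx)" by linarith
    have "DG (hw,hx) = DG (hw,0) + DG (0,hx)"
      using linear_add[OF linDG, of "(hw,0)" "(0,hx)"] by simp
    then have "norm (DG (0,hx)) \<le> norm (DG (hw,hx)) + norm (DG (hw,0))"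
      by (metis add_diff_cancel_left' norm_triangle_ineq4 add.commute)
    then have "c * norm hx \<le> c/2 * (norm hw + norm hx) + norm hw * K"
      using a1 K(2)[of hw] c(2)[of hx] by linarith
    moreover have "(c/2 + K) * norm hw = c/2 * norm hw + K * norm hw"
      "c/2 * (norm hw + norm hx) = c/2 * norm hw + c/2 * norm hx" "norm hw * K = K * norm hw"
      "c * norm hx = c/2 * norm hx + c/2 * norm hx"
      by (simp_all add: algebra_simps)
    ultimately have "c/2 * norm hx \<le> (c/2 + K) * norm hw" by linarith
    then have hxC: "norm hx \<le> C * norm hw"
      using c(1) by (simp add: C_def field_simps)
    have "\<bar>F (w',x') - F (w,x) - n \<bullet> hw\<bar> \<le> \<eta> * norm (hw,hx)"
      using d2(2)[of "(w',x')"] lt z by simp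
    also have "\<dots> \<le> \<eta> * (norm hw + norm hx)" using nz eta by (simp add: mult_left_mono)
    also have "\<dots> \<le> \<eta> * ((1 + C) * norm hw)" using hxC eta by (intro mult_left_mono) (auto simp: algebra_simps)
    also have "\<dots> = \<epsilon> * norm hw" using C by (simp add: \<eta>_def)
    finally show "\<bar>F (w',x') - F (w,x) - n \<bullet> (w' - w)\<bar> \<le> \<epsilon> * norm (w' - w)" by (simp add: hw_def)
  qed
qed



lemma norm_triple1: "norm (a, b) \<le> norm (a, (b, c))"
  by (simp add: norm_Pair)

lemma norm_triple2: "norm (a, c) \<le> norm (a, (b, c))"
  by (simp add: norm_Pair)

lemma crit_estimate:
  fixes w :: "real^'n^'r" and x :: "real^'n"
  assumes x: "\<forall>k. x \<noteq> w $ k" and g: "Gw w x = 0" and h: "inj (Hw w x)" and e: "\<epsilon> > 0"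
  shows "\<exists>\<delta>>0. \<forall>w' x'. norm ((w',x') - (w,x)) < \<delta> \<longrightarrow> Gw w' x' = 0 \<longrightarrow>
            \<bar>f_w w' x' - f_w w x - nuw w x \<bullet> (w' - w)\<bar> \<le> \<epsilon> * norm (w' - w)"
proof -
  have dF: "((\<lambda>z::(real^'n^'r) \<times> (real^'n). f_w (fst z) (snd z)) has_derivative (\<lambda>h. nuw w x \<bullet> fst h)) (at (w,x))"
    using F_joint[of x w] x g by simp
  have dG: "((\<lambda>z::(real^'n^'r) \<times> (real^'n). Gw (fst z) (snd z)) has_derivative
          (\<lambda>h. \<Sum>k\<in>UNIV. 2 *\<^sub>R Dainv (x - w$k) (snd h - fst h $ k))) (at (w,x))"
    using G_joint[of x w] x by simp
  have H: "inj (\<lambda>h. (\<lambda>h. \<Sum>k\<in>UNIV. 2 *\<^sub>R Dainv (x - w$k) (snd h - fst h $ k)) ((0::real^'n^'r),h))"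
    using h by (simp add: Hw_def[abs_def])
  from key_estimate[OF dF dG H _ e] g show ?thesis by simp
qed

lemma negligible_B2: "negligible (B2 :: (real^'n^'r) set)"
proof -
  define T where "T = {(w::real^'n^'r, (x::real^'n, y::real^'n)). (\<forall>k. x \<noteq> w$k) \<and> (\<forall>k. y \<noteq> w$k) \<and> x \<noteq> y \<and>
   Gw w x = 0 \<and> Gw w y = 0 \<and> inj (Hw w x) \<and> inj (Hw w y) \<and> f_w w x = f_w w y}"
  have "B2 \<subseteq> fst ` T"
    unfolding B2_def T_def by (auto simp: image_iff) (metis fst_conv)
  moreover have "negligible (fst ` T)"
  proof (rule cone_negligible)
    fix t assume "t \<in> T"
    then obtain w x y where t: "t = (w,(x,y))" and tx: "\<forall>k. x \<noteq> w$k" and ty: "\<forall>k. y \<noteq> w$k"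
      and xy: "x \<noteq> y" and gx: "Gw w x = 0" and gy: "Gw w y = 0" and hx: "inj (Hw w x)" and hy: "inj (Hw w y)"
      and fe: "f_w w x = f_w w y"
      unfolding T_def by auto
    define \<nu>0 where "\<nu>0 = nuw w x - nuw w y"
    obtain k :: 'r where True by blast
    have "\<nu>0 $ k \<noteq> 0"
    proof
      assume "\<nu>0 $ k = 0"
      then have "ainv (x - w$k) = ainv (y - w$k)" by (simp add: \<nu>0_def nuw_def)
      then have "x - w$k = y - w$k" by (rule injD[OF inj_ainv])
      with xy show False by simp
    qed
    then have n0: "\<nu>0 \<noteq> 0" by auto
    then have np: "norm \<nu>0 > 0" by simp
    define \<epsilon> where "\<epsilon> = norm \<nu>0 / 4"
    have ep: "\<epsilon> > 0" using np by (simp add: \<epsilon>_def)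
    obtain \<delta>x where dx: "\<delta>x > 0" "\<forall>w' x'. norm ((w',x') - (w,x)) < \<delta>x \<longrightarrow> Gw w' x' = 0 \<longrightarrow>
            \<bar>f_w w' x' - f_w w x - nuw w x \<bullet> (w' - w)\<bar> \<le> \<epsilon> * norm (w' - w)"
      using crit_estimate[OF tx gx hx ep] by blast
    obtain \<delta>y where dy: "\<delta>y > 0" "\<forall>w' x'. norm ((w',x') - (w,y)) < \<delta>y \<longrightarrow> Gw w' x' = 0 \<longrightarrow>
            \<bar>f_w w' x' - f_w w y - nuw w y \<bullet> (w' - w)\<bar> \<le> \<epsilon> * norm (w' - w)"
      using crit_estimate[OF ty gy hy ep] by blast
    show "\<exists>\<nu> \<delta>. norm \<nu> = 1 \<and> \<delta> > 0 \<and>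
       (\<forall>t'\<in>T. dist t' t < \<delta> \<longrightarrow> \<bar>\<nu> \<bullet> (fst t' - fst t)\<bar> \<le> norm (fst t' - fst t) / 2)"
    proof (intro exI[of _ "\<nu>0 /\<^sub>R norm \<nu>0"] exI[of _ "min \<delta>x \<delta>y"] conjI ballI impI)
      show "norm (\<nu>0 /\<^sub>R norm \<nu>0) = 1" using n0 by simp
      show "min \<delta>x \<delta>y > 0" using dx dy by simp
      fix t' assume t'T: "t' \<in> T" and dt: "dist t' t < min \<delta>x \<delta>y"
      then obtain w' x' y' where t': "t' = (w',(x',y'))" and gx': "Gw w' x' = 0" and gy': "Gw w' y' = 0"
        and fe': "f_w w' x' = f_w w' y'"
        unfolding T_def by auto
      have "dist t' t = norm ((w' - w), ((x' - x), (y' - y)))" using t t' by (simp add: dist_norm)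
      then have n1: "norm ((w',x') - (w,x)) < \<delta>x" and n2: "norm ((w',y') - (w,y)) < \<delta>y"
        using dt norm_triple1[of "w' - w" "x' - x" "y' - y"] norm_triple2[of "w' - w" "y' - y" "x' - x"]
        by auto
      have ex: "\<bar>f_w w' x' - f_w w x - nuw w x \<bullet> (w' - w)\<bar> \<le> \<epsilon> * norm (w' - w)"
        using dx(2) n1 gx' by blast
      have ey: "\<bar>f_w w' y' - f_w w y - nuw w y \<bullet> (w' - w)\<bar> \<le> \<epsilon> * norm (w' - w)"
        using dy(2) n2 gy' by blast
      have "\<nu>0 \<bullet> (w' - w) = (f_w w' y' - f_w w y - nuw w y \<bullet> (w' - w)) - (f_w w' x' - f_w w x - nuw w x \<bullet> (w' - w))"
        using fe fe' by (simp add: \<nu>0_def inner_diff_left)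
      then have "\<bar>\<nu>0 \<bullet> (w' - w)\<bar> \<le> 2 * \<epsilon> * norm (w' - w)" using ex ey by linarith
      then have "\<bar>\<nu>0 \<bullet> (w' - w)\<bar> \<le> norm \<nu>0 * (norm (w' - w) / 2)" by (simp add: \<epsilon>_def)
      then have "\<bar>\<nu>0 \<bullet> (w' - w)\<bar> / norm \<nu>0 \<le> norm (w' - w) / 2"
        using np by (simp add: divide_le_eq mult.commute)
      moreover have "\<bar>(\<nu>0 /\<^sub>R norm \<nu>0) \<bullet> (w' - w)\<bar> = \<bar>\<nu>0 \<bullet> (w' - w)\<bar> / norm \<nu>0"
        using np by (simp add: abs_mult inverse_eq_divide)
      ultimately show "\<bar>(\<nu>0 /\<^sub>R norm \<nu>0) \<bullet> (fst t' - fst t)\<bar> \<le> norm (fst t' - fst t) / 2"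
        using t t' by simp
    qed
  qed
  ultimately show ?thesis by (rule negligible_subset[rotated])
qed



definition S0 :: "'r \<Rightarrow> real^'n^'r \<Rightarrow> real^'n" where
  "S0 k0 p = (\<Sum>k\<in>UNIV-{k0}. ainv (p$k0 - p$k))"
definition DS0 :: "'r \<Rightarrow> real^'n^'r \<Rightarrow> real^'n^'r \<Rightarrow> real^'n" where
  "DS0 k0 p h = (\<Sum>k\<in>UNIV-{k0}. Dainv (p$k0 - p$k) (h$k0 - h$k))"
definition Psi :: "'r \<Rightarrow> real^'n^'r \<Rightarrow> real^'n^'r" where
  "Psi k0 p = p + axis k0 (ainv (S0 k0 p))"
definition DPsi :: "'r \<Rightarrow> real^'n^'r \<Rightarrow> real^'n^'r \<Rightarrow> real^'n^'r" where
  "DPsi k0 p h = h + axis k0 (Dainv (S0 k0 p) (DS0 k0 p h))"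

lemma linear_axis_vec: "linear (axis k :: 'a::real_vector \<Rightarrow> 'a^'r)"
  by (rule linearI) (auto simp: vec_eq_iff axis_def)

lemma hd_nth_diff:
  "((\<lambda>p::real^'n^'r. p$k0 - p$k) has_derivative (\<lambda>h. h$k0 - h$k)) (at p)"
proof -
  have "linear (\<lambda>p::real^'n^'r. p$k0 - p$k)" by (rule linearI) (auto simp: algebra_simps)
  then show ?thesis by (simp add: linear_imp_has_derivative)
qed

lemma Psi_deriv:
  fixes p :: "real^'n^'r"
  assumes d: "\<And>k. k \<noteq> k0 \<Longrightarrow> p$k0 \<noteq> p$k" and s: "S0 k0 p \<noteq> 0"
  shows "(Psi k0 has_derivative DPsi k0 p) (at p)"
proof -
  have t: "((\<lambda>p::real^'n^'r. ainv (p$k0 - p$k)) has_derivative (\<lambda>h. Dainv (p$k0 - p$k) (h$k0 - h$k))) (at p)"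
    if "k \<in> UNIV - {k0}" for k
  proof -
    have "(ainv has_derivative Dainv (p$k0 - p$k)) (at ((\<lambda>p::real^'n^'r. p$k0 - p$k) p))"
      using d that by (simp add: ainv_deriv)
    from has_derivative_compose[OF hd_nth_diff this] show ?thesis .
  qed
  have dS: "(S0 k0 has_derivative DS0 k0 p) (at p)"
    unfolding S0_def[abs_def] DS0_def[abs_def] by (rule has_derivative_sum) (rule t)
  have "(ainv has_derivative Dainv (S0 k0 p)) (at (S0 k0 p))" using s by (rule ainv_deriv)
  from has_derivative_compose[OF dS this]
  have d2: "((\<lambda>p. ainv (S0 k0 p)) has_derivative (\<lambda>h. Dainv (S0 k0 p) (DS0 k0 p h))) (at p)" .
  have d3: "(axis k0 has_derivative axis k0) (at (ainv (S0 k0 p)))"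
    by (simp add: linear_axis_vec linear_imp_has_derivative)
  from has_derivative_compose[OF d2 d3]
  have "((\<lambda>p. axis k0 (ainv (S0 k0 p))) has_derivative (\<lambda>h. axis k0 (Dainv (S0 k0 p) (DS0 k0 p h)))) (at p)" .
  from has_derivative_add[OF has_derivative_ident this]
  show ?thesis unfolding Psi_def[abs_def] DPsi_def[abs_def] .
qed

lemma linear_Hw: "linear (Hw w x)"
  by (rule linearI)
     (simp_all add: Hw_def linear_add[OF linear_Dainv] linear_scale[OF linear_Dainv]
        scaleR_add_right sum.distrib scaleR_sum_right scaleR_left_commute mult.commute)

lemma Dainv_0[simp]: "Dainv u 0 = 0" by (simp add: Dainv_def)
lemma Dainv_minus: "Dainv u (- v) = - Dainv u v" by (simp add: Dainv_def)

lemma B1_sub: "(B1 :: (real^'n^'r) set) \<subseteq> Psi k0 ` {p. (\<forall>k. k \<noteq> k0 \<longrightarrow> p$k0 \<noteq> p$k) \<and> S0 k0 p \<noteq> 0 \<and> \<not> inj (DPsi k0 p)}"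
proof
  fix w :: "real^'n^'r" assume "w \<in> B1"
  then obtain x where x: "\<forall>k. x \<noteq> w$k" and g: "Gw w x = 0" and h: "\<not> inj (Hw w x)"
    by (auto simp: B1_def)
  obtain v where v: "v \<noteq> 0" "Hw w x v = 0"
    using h linear_injective_0[OF linear_Hw] by blast
  define p where "p = (\<chi> k. if k = k0 then x else w$k)"
  have pk0: "p$k0 = x" by (simp add: p_def)
  have pk: "p$k = w$k" if "k \<noteq> k0" for k using that by (simp add: p_def)
  have "(\<Sum>k\<in>UNIV. ainv (x - w$k)) = 0"
    using g by (simp add: Gw_def scaleR_sum_right[symmetric])
  then have sumsplit: "ainv (x - w$k0) + (\<Sum>k\<in>UNIV-{k0}. ainv (x - w$k)) = 0"
    by (simp add: sum.remove[of UNIV k0])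
  have S0p: "S0 k0 p = - ainv (x - w$k0)"
  proof -
    have "S0 k0 p = (\<Sum>k\<in>UNIV-{k0}. ainv (x - w$k))"
      unfolding S0_def pk0 by (rule sum.cong) (auto simp: pk)
    with sumsplit show ?thesis by (simp add: eq_neg_iff_add_eq_0 add.commute)
  qed
  have Sne: "S0 k0 p \<noteq> 0" using S0p x by simp
  have aS: "ainv (S0 k0 p) = - (x - w$k0)" by (simp add: S0p ainv_neg)
  have Psip: "Psi k0 p = w"
  proof (rule iffD2[OF vec_eq_iff], rule allI)
    fix k show "Psi k0 p $ k = w $ k"
      by (cases "k = k0") (simp_all add: Psi_def aS pk0 pk axis_def)
  qed
  have "(\<Sum>k\<in>UNIV. Dainv (x - w$k) v) = 0"
    using v(2) by (simp add: Hw_def scaleR_sum_right[symmetric])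
  then have vsplit: "Dainv (x - w$k0) v + (\<Sum>k\<in>UNIV-{k0}. Dainv (x - w$k) v) = 0"
    by (simp add: sum.remove[of UNIV k0])
  define hh where "hh = (axis k0 v :: real^'n^'r)"
  have hh0: "hh \<noteq> 0" using v by (simp add: hh_def)
  have "DS0 k0 p hh = (\<Sum>k\<in>UNIV-{k0}. Dainv (x - w$k) v)"
    unfolding DS0_def pk0 by (rule sum.cong) (auto simp: pk hh_def axis_def)
  then have DS: "DS0 k0 p hh = - Dainv (x - w$k0) v"
    using vsplit by (simp add: eq_neg_iff_add_eq_0 add.commute)
  have xw: "x - w$k0 = - ainv (S0 k0 p)" by (simp add: aS)
  have "Dainv (S0 k0 p) (DS0 k0 p hh) = - v"
    unfolding DS xw Dainv_neg Dainv_minus Dainv_inv[OF Sne] ..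
  then have "DPsi k0 p hh = 0" by (simp add: DPsi_def hh_def axis_def vec_eq_iff)
  moreover have "DPsi k0 p 0 = 0" by (simp add: DPsi_def DS0_def)
  ultimately have "\<not> inj (DPsi k0 p)" using hh0 by (metis injD)
  moreover have "\<forall>k. k \<noteq> k0 \<longrightarrow> p$k0 \<noteq> p$k" using x pk pk0 by metis
  ultimately show "w \<in> Psi k0 ` {p. (\<forall>k. k \<noteq> k0 \<longrightarrow> p$k0 \<noteq> p$k) \<and> S0 k0 p \<noteq> 0 \<and> \<not> inj (DPsi k0 p)}"
    using Sne Psip by force
qed

lemma negligible_B1: "negligible (B1 :: (real^'n^'r) set)"
proof -
  obtain k0 :: 'r where True by blast
  have "negligible (Psi k0 ` {p. (\<forall>k. k \<noteq> k0 \<longrightarrow> p$k0 \<noteq> p$k) \<and> S0 k0 p \<noteq> 0 \<and> \<not> inj (DPsi k0 p)})"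
    by (rule sard_vecvec[of _ _ "DPsi k0"]) (auto intro: Psi_deriv)
  then show ?thesis using B1_sub negligible_subset by blast
qed


theorem proposition6p3:
  assumes "CARD('n) \<ge> 2"
  shows "closure (GL :: (real^'n^'r) set) = UNIV"
proof -
  have "negligible (B0 \<union> B1 \<union> B2 :: (real^'n^'r) set)"
    using negligible_B0 negligible_B1 negligible_B2 by (intro negligible_Un)
  then have "negligible (- GL :: (real^'n^'r) set)"
    using notGL negligible_subset by blast
  then show ?thesis by (rule closure_from_negligible)
qed

end
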